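(* Let $\sqrt{2} = (1.b_1 b_2 b_3 \cdots)_2$ be the binary expansion of $\sqrt 2$. For integers $n \geq 2$, let $L_n(x) = \left\lfloor \frac{x(2^n - x)}{2^{n-2}} \right\rfloor$ for $x \in X_n = \{1, 2, \dots, 2^n - 1\}$, and call $n$ undesirable if there exists $x \in X_n$ with $L_n(x) = 2^{n-1}$. Then an integer $n \geq 2$ is undesirable if $$(0.b_{n-1} b_n b_{n+1} \cdots)_2 \leq (0.01 b_1 b_2 b_3 \cdots)_2 .$$
   Context: $(0.c_1c_2c_3\cdots)_2$ denotes the real number $\sum_{j \ge 1} c_j 2^{-j}$. *)

theory Defs
  imports Complex_Main
begin

definition binfrac :: "(nat \<Rightarrow> nat) \<Rightarrow> real" where
  "binfrac c = (\<Sum>j. real (c (Suc j)) / 2 ^ Suc j)"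

text \<open>Binary digits of sqrt 2 = (1.b_1 b_2 ...)_2 (unique since sqrt 2 is irrational).\<close>
definition sqrt2_digit :: "nat \<Rightarrow> nat" where
  "sqrt2_digit j = nat \<lfloor>sqrt 2 * 2 ^ j\<rfloor> mod 2"

definition L :: "nat \<Rightarrow> int \<Rightarrow> int" where
  "L n x = \<lfloor>real_of_int x * (2 ^ n - real_of_int x) / 2 ^ (n - 2)\<rfloor>"

definition undesirable :: "nat \<Rightarrow> bool" where
  "undesirable n \<longleftrightarrow> (\<exists>x \<in> {1 .. 2 ^ n - 1}. L n x = 2 ^ (n - 1))"

end

theory Submission imports Defs begin
lemma K: "\<lfloor>2*(y::real)\<rfloor> = 2*\<lfloor>y\<rfloor> + \<lfloor>2*y\<rfloor> mod 2"
proof -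
  have a: "2*\<lfloor>y\<rfloor> \<le> \<lfloor>2*y\<rfloor>" by (simp add: le_floor_iff)
  have "2*y < of_int(2*\<lfloor>y\<rfloor>+2)" using real_of_int_floor_add_one_gt[of y] by (simp; linarith)
  then have "\<lfloor>2*y\<rfloor> < 2*\<lfloor>y\<rfloor>+2" by (simp only: floor_less_iff)
  then have b: "\<lfloor>2*y\<rfloor> \<le> 2*\<lfloor>y\<rfloor> + 1" by linarith
  from a b show ?thesis by presburger
qed

lemma partial:
  fixes t :: real
  shows "(\<Sum>j<J. real_of_int (\<lfloor>t*2^Suc j\<rfloor> mod 2)/2^Suc j) = (\<lfloor>t*2^J\<rfloor> - 2^J*\<lfloor>t\<rfloor>)/2^J"
proof (induction J)
  case 0 then show ?case by simp
next
  case (Suc J)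
  have k: "\<lfloor>t*2^Suc J\<rfloor> = 2*\<lfloor>t*2^J\<rfloor> + \<lfloor>t*2^Suc J\<rfloor> mod 2"
    using K[of "t*2^J"] by (simp add: mult_ac)
  have "(\<Sum>j<Suc J. real_of_int (\<lfloor>t*2^Suc j\<rfloor> mod 2)/2^Suc j)
     = (\<lfloor>t*2^J\<rfloor> - 2^J*\<lfloor>t\<rfloor>)/2^J + real_of_int (\<lfloor>t*2^Suc J\<rfloor> mod 2)/2^Suc J"
    using Suc by simp
  also have "\<dots> = (2*\<lfloor>t*2^J\<rfloor> + \<lfloor>t*2^Suc J\<rfloor> mod 2 - 2^Suc J*\<lfloor>t\<rfloor>)/2^Suc J"
    by (simp add: field_simps)
  also have "\<dots> = (\<lfloor>t*2^Suc J\<rfloor> - 2^Suc J*\<lfloor>t\<rfloor>)/2^Suc J"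
    using arg_cong[OF k, of real_of_int] by simp
  finally show ?case .
qed

lemma G:
  fixes t :: real
  shows "(\<lambda>j. real_of_int (\<lfloor>t*2^Suc j\<rfloor> mod 2)/2^Suc j) sums (t - \<lfloor>t\<rfloor>)"
proof -
  define e where "e J = (t*2^J - \<lfloor>t*2^J\<rfloor>)/(2::real)^J" for J :: nat
  have ps: "(\<Sum>j<J. real_of_int (\<lfloor>t*2^Suc j\<rfloor> mod 2)/2^Suc j) = (t - \<lfloor>t\<rfloor>) - e J" for J
    unfolding partial e_def by (simp add: field_simps)
  have e0: "e \<longlonglongrightarrow> 0"
  proof (rule tendsto_sandwich[of "\<lambda>_. 0" _ _ "\<lambda>J. (1/2)^J"])
    show "\<forall>\<^sub>F J in sequentially. 0 \<le> e J" unfolding e_def by (auto intro!: always_eventually)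
    have "e J \<le> (1/2)^J" for J
    proof -
      have "t*2^J - \<lfloor>t*2^J\<rfloor> \<le> 1" using real_of_int_floor_add_one_gt[of "t*2^J"] by linarith
      then have "e J \<le> 1/2^J" unfolding e_def by (intro divide_right_mono) auto
      then show ?thesis by (simp add: power_one_over)
    qed
    then show "\<forall>\<^sub>F J in sequentially. e J \<le> (1/2)^J" by (auto intro!: always_eventually)
    show "(\<lambda>_. 0::real) \<longlonglongrightarrow> 0" by simp
    show "(\<lambda>J. (1/2::real)^J) \<longlonglongrightarrow> 0" by (rule LIMSEQ_power_zero) simp
  qed
  show ?thesis unfolding sums_def ps
    using tendsto_diff[OF tendsto_const e0] by simp
qed

lemma D: "k \<ge> 0 \<Longrightarrow> real (nat k mod 2) = real_of_int (k mod 2)"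
proof -
  assume k: "k \<ge> 0"
  then have "nat k mod 2 = nat (k mod 2)" by (simp add: nat_mod_distrib)
  moreover have "k mod 2 \<ge> 0" by simp
  ultimately show ?thesis by simp
qed

lemma floor_sqrt2: "\<lfloor>sqrt 2\<rfloor> = 1"
proof -
  have "1 \<le> sqrt (2::real)" by simp
  moreover have "sqrt (2::real) < 2" by (rule real_less_lsqrt) auto
  ultimately show ?thesis by (simp add: floor_eq_iff)
qed

lemma LHS:
  fixes k :: nat
  shows "binfrac (\<lambda>j. sqrt2_digit (k + j)) = sqrt 2 * 2^k - \<lfloor>sqrt 2 * 2^k\<rfloor>"
proof -
  have "(\<lambda>j. real (sqrt2_digit (k + Suc j)) / 2 ^ Suc j)
      = (\<lambda>j. real_of_int (\<lfloor>(sqrt 2 * 2^k)*2^Suc j\<rfloor> mod 2)/2^Suc j)"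
  proof
    fix j
    have e: "sqrt 2 * 2^(k + Suc j) = (sqrt 2 * 2^k)*2^Suc j" by (simp add: power_add)
    show "real (sqrt2_digit (k + Suc j)) / 2 ^ Suc j = real_of_int (\<lfloor>(sqrt 2 * 2^k)*2^Suc j\<rfloor> mod 2)/2^Suc j"
      unfolding sqrt2_digit_def e by (subst D) auto
  qed
  then show ?thesis unfolding binfrac_def by (simp only: sums_unique[OF G, symmetric])
qed

lemma RHS:
  "binfrac (\<lambda>j. if j = 1 then 0 else if j = 2 then 1 else sqrt2_digit (j - 2)) = sqrt 2 / 4"
proof -
  define f where "f j = real ((\<lambda>j. if j = 1 then 0 else if j = 2 then 1 else sqrt2_digit (j - 2)) (Suc j)) / 2 ^ Suc j" for j
  have g: "(\<lambda>j. sqrt 2 * 2^0 - \<lfloor>sqrt 2 * 2^0\<rfloor>) 0 = sqrt 2 - 1" using floor_sqrt2 by simp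
  have "(\<lambda>j. real (sqrt2_digit (0 + Suc j)) / 2 ^ Suc j) sums (sqrt 2 - 1)"
  proof -
    have "(\<lambda>j. real (sqrt2_digit (0 + Suc j)) / 2 ^ Suc j)
      = (\<lambda>j. real_of_int (\<lfloor>(sqrt 2)*2^Suc j\<rfloor> mod 2)/2^Suc j)"
      unfolding sqrt2_digit_def by (auto intro!: ext D)
    then show ?thesis using G[of "sqrt 2"] floor_sqrt2 by simp
  qed
  then have "(\<lambda>j. (1/4) * (real (sqrt2_digit (Suc j)) / 2 ^ Suc j)) sums ((1/4)*(sqrt 2 - 1))"
    by (intro sums_mult) simp
  moreover have "(\<lambda>j. f (Suc (Suc j))) = (\<lambda>j. (1/4) * (real (sqrt2_digit (Suc j)) / 2 ^ Suc j))"
    unfolding f_def by (auto intro!: ext simp: field_simps)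
  ultimately have "(\<lambda>j. f (Suc (Suc j))) sums ((1/4)*(sqrt 2 - 1))" by simp
  then have "(\<lambda>j. f (Suc j)) sums ((1/4)*(sqrt 2 - 1) + f 1)"
    using sums_Suc_iff[of "\<lambda>j. f (Suc j)"] by simp
  then have "f sums ((1/4)*(sqrt 2 - 1) + f 1 + f 0)" using sums_Suc_iff[of f] by simp
  moreover have "f 1 = 1/4" "f 0 = 0" unfolding f_def by simp_all
  ultimately have "f sums (sqrt 2 / 4)" by (simp add: field_simps)
  then show ?thesis unfolding binfrac_def f_def by (simp add: sums_unique[symmetric])
qed

theorem lemma2p3:
  fixes n :: nat
  assumes "n \<ge> 2"
    and "binfrac (\<lambda>j. sqrt2_digit (n - 2 + j))
         \<le> binfrac (\<lambda>j. if j = 1 then 0 else if j = 2 then 1 else sqrt2_digit (j - 2))"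
  shows "undesirable n"
proof -
  define k where "k = n - 2"
  have n: "n = k + 2" unfolding k_def using assms(1) by simp
  define P :: real where "P = 2^k"
  define a where "a = sqrt 2 * P"
  define m where "m = \<lfloor>a\<rfloor>"
  define f where "f = a - m"
  have fle: "f \<le> sqrt 2 / 4" using assms(2) unfolding n LHS RHS f_def m_def a_def P_def by simp
  have P1: "P \<ge> 1" unfolding P_def by simp
  have a2: "a^2 = 2 * P^2" unfolding a_def by (simp add: power_mult_distrib)
  have a0: "a \<ge> 0" unfolding a_def P_def by simp
  have f0: "0 \<le> f" "f < 1" unfolding f_def m_def by linarith+
  have m0: "m \<ge> 0" unfolding m_def using a0 by simp
  have mle: "of_int m \<le> a" unfolding m_def by simp
  have s2: "sqrt (2::real) < 2" by (rule real_less_lsqrt) auto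
  have a_lt: "a < 2*P" unfolding a_def using s2 P1 by simp
  have m2le: "(of_int m)^2 \<le> 2*P^2" 
  proof -
    have "(of_int m)^2 \<le> a^2" using mle m0 by (intro power_mono) auto
    then show ?thesis using a2 by simp
  qed
  have key: "2 * a * f \<le> P"
  proof -
    have "2*a*f \<le> 2*a*(sqrt 2/4)" using fle a0 f0 by (intro mult_left_mono) auto
    also have "\<dots> = P" unfolding a_def by (simp add: field_simps)
    finally show ?thesis .
  qed
  have m2gt: "(of_int m)^2 > 2*P^2 - P"
  proof -
    have "of_int m = a - f" unfolding f_def by simp
    moreover have "(a - f)^2 = a^2 - 2*a*f + f^2" by (simp add: power2_eq_square algebra_simps)
    ultimately have "(of_int m)^2 = a^2 - 2*a*f + f^2" by simp
    show ?thesis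
    proof (cases "f = 0")
      case True
      then show ?thesis using \<open>(of_int m)^2 = _\<close> a2 P1 by simp
    next
      case False
      then have "f^2 > 0" by simp
      then show ?thesis using \<open>(of_int m)^2 = _\<close> a2 key by linarith
    qed
  qed
  define x where "x = 2^(k+1) - m"
  have mlt: "m < 2^(k+1)"
  proof -
    have "of_int m < (2::real)^(k+1)" using mle a_lt unfolding P_def by simp
    then have "of_int m < (of_int (2^(k+1)) :: real)" by simp
    then show ?thesis by (simp only: of_int_less_iff)
  qed
  have xin: "x \<in> {1 .. 2^n - 1}"
  proof -
    have "(2::int)^(k+1) \<le> 2^(k+2) - 1" by simp
    then show ?thesis unfolding x_def n using m0 mlt by simp
  qed
  have "L n x = 2^(n-1)"
  proof -
    have v: "real_of_int x * (2 ^ n - real_of_int x) / 2 ^ (n - 2) = (4*P^2 - (of_int m)^2)/P"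
      unfolding x_def n P_def by (simp add: power2_eq_square algebra_simps)
    have lo: "2*P \<le> (4*P^2 - (of_int m)^2)/P" using m2le P1 by (simp add: field_simps power2_eq_square)
    have hi: "(4*P^2 - (of_int m)^2)/P < 2*P + 1" using m2gt P1 by (simp add: field_simps power2_eq_square)
    have "\<lfloor>(4*P^2 - (of_int m)^2)/P\<rfloor> = 2^(k+1)"
      using lo hi unfolding P_def by (simp add: floor_eq_iff)
    moreover have "L n x = \<lfloor>(4*P^2 - (of_int m)^2)/P\<rfloor>" unfolding L_def v ..
    moreover have "(2::int)^(n-1) = 2^(k+1)" unfolding n by simp
    ultimately show ?thesis by simp
  qed
  then show ?thesis unfolding undesirable_def using xin by blast
qed
end
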